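(* Every totally disconnected compact metric space has the $\omega$-FTP property. In particular, the Cantor space has the $\omega$-FTP property.
   Context: For continuous $f:X\to X$ and $x\in X$, $\omega_f(x)=\{y:\ \exists\, n_i\to+\infty,\ f^{n_i}(x)\to y\}$, totally periodic if all its points are periodic for $f$. A compact metric space $X$ has the $\omega$-FTP property if for every continuous $f:X\to X$, every totally periodic $\omega$-limit set of $f$ is finite. *)

theory Defs
  imports "HOL-Analysis.Analysis"
begin

definition omega_limit :: "'a topology \<Rightarrow> ('a \<Rightarrow> 'a) \<Rightarrow> 'a \<Rightarrow> 'a set" where
  "omega_limit X f x = {y. \<exists>n :: nat \<Rightarrow> nat. filterlim n at_top sequentially \<and>
                             limitin X (\<lambda>i. (f ^^ n i) x) y sequentially}"

definition periodic_point :: "('a \<Rightarrow> 'a) \<Rightarrow> 'a \<Rightarrow> bool" where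
  "periodic_point f y \<longleftrightarrow> (\<exists>p::nat. p > 0 \<and> (f ^^ p) y = y)"

definition totally_periodic :: "('a \<Rightarrow> 'a) \<Rightarrow> 'a set \<Rightarrow> bool" where
  "totally_periodic f A \<longleftrightarrow> (\<forall>y\<in>A. periodic_point f y)"

definition omega_FTP :: "'a topology \<Rightarrow> bool" where
  "omega_FTP X \<longleftrightarrow> (\<forall>f x. continuous_map X X f \<and> x \<in> topspace X \<and>
      totally_periodic f (omega_limit X f x) \<longrightarrow> finite (omega_limit X f x))"

definition totally_disconnected_space :: "'a topology \<Rightarrow> bool" where
  "totally_disconnected_space X \<longleftrightarrow>
     (\<forall>S. S \<subseteq> topspace X \<and> connectedin X S \<longrightarrow> (\<exists>a. S \<subseteq> {a}))"

definition cantor_space :: "(nat \<Rightarrow> nat) topology" where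
  "cantor_space = product_topology (\<lambda>_. discrete_topology {0, 1}) UNIV"

end

theory Submission imports Defs begin

lemma cont_funpow: "continuous_map X X f \<Longrightarrow> continuous_map X X (f ^^ n)"
  by (induction n) (auto intro: continuous_map_compose simp: continuous_map_id)

lemma funpow_in: "continuous_map X X f \<Longrightarrow> x \<in> topspace X \<Longrightarrow> (f ^^ n) x \<in> topspace X"
  using cont_funpow continuous_map_image_subset_topspace by fastforce

lemma clopen_orbit_union:
  assumes f: "continuous_map X X f" and "closedin X U" "openin X U"
  shows "closedin X {w\<in>topspace X. \<exists>i<p. (f^^i) w \<in> U} \<and> openin X {w\<in>topspace X. \<exists>i<p. (f^^i) w \<in> U}"
proof -
  have eq: "{w\<in>topspace X. \<exists>i<p. (f^^i) w \<in> U} = (\<Union>i\<in>{..<p}. {w\<in>topspace X. (f^^i) w \<in> U})"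
    by auto
  show ?thesis unfolding eq
    using assms
    by (intro conjI closedin_Union openin_Union)
       (auto intro: closedin_continuous_map_preimage openin_continuous_map_preimage cont_funpow)
qed

locale omsetup =
  fixes X :: "'a topology" and f x \<Omega>
  assumes cpt: "compact_space X" and H: "Hausdorff_space X"
    and sep: "\<And>y T. y \<in> topspace X \<Longrightarrow> closedin X T \<Longrightarrow> y \<notin> T \<Longrightarrow>
               \<exists>U. closedin X U \<and> openin X U \<and> y \<in> U \<and> U \<inter> T = {}"
    and f: "continuous_map X X f" and x: "x \<in> topspace X"
    and Om: "\<Omega> = {y \<in> topspace X. \<forall>U. openin X U \<and> y \<in> U \<longrightarrow> (\<forall>N. \<exists>n\<ge>N. (f^^n) x \<in> U)}"
begin

lemma Om_sub: "\<Omega> \<subseteq> topspace X" using Om by auto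

lemma Om_closed: "closedin X \<Omega>"
proof -
  have "openin X (topspace X - \<Omega>)"
  proof (subst openin_subopen, intro ballI)
    fix y assume y: "y \<in> topspace X - \<Omega>"
    then obtain U N where U: "openin X U" "y \<in> U" and N: "\<forall>n\<ge>N. (f^^n) x \<notin> U"
      using Om by auto
    have "U \<subseteq> topspace X - \<Omega>"
      using U N openin_subset[OF U(1)] unfolding Om by blast
    then show "\<exists>T. openin X T \<and> y \<in> T \<and> T \<subseteq> topspace X - \<Omega>" using U by blast
  qed
  then show ?thesis using Om_sub by (simp add: closedin_def)
qed

lemma Om_inv: "y \<in> \<Omega> \<Longrightarrow> f y \<in> \<Omega>"
proof -
  assume y: "y \<in> \<Omega>"
  have "f y \<in> topspace X" using y Om_sub f continuous_map_image_subset_topspace by blast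
  moreover have "\<exists>n\<ge>N. (f^^n) x \<in> U" if U: "openin X U" "f y \<in> U" for U N
  proof -
    have "openin X {z \<in> topspace X. f z \<in> U}" by (rule openin_continuous_map_preimage[OF f U(1)])
    moreover have "y \<in> {z \<in> topspace X. f z \<in> U}" using y U Om by auto
    ultimately obtain n where "n \<ge> N" "(f^^n) x \<in> {z \<in> topspace X. f z \<in> U}"
      using y Om by blast
    then show ?thesis by (intro exI[of _ "Suc n"]) auto
  qed
  ultimately show "f y \<in> \<Omega>" using Om by auto
qed

lemma Om_inv_pow: "y \<in> \<Omega> \<Longrightarrow> (f^^i) y \<in> \<Omega>"
  by (induction i) (auto intro: Om_inv)

lemma eventually_in:
  assumes G: "openin X G" "\<Omega> \<subseteq> G"
  shows "\<exists>N. \<forall>n\<ge>N. (f^^n) x \<in> G"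
proof -
  have K: "compactin X (topspace X - G)"
    using G cpt closedin_compact_space by blast
  have "\<forall>z\<in>topspace X - G. \<exists>U N. openin X U \<and> z \<in> U \<and> (\<forall>n\<ge>N. (f^^n) x \<notin> U)"
    using G Om by auto
  then obtain U N where UN: "\<And>z. z\<in>topspace X - G \<Longrightarrow> openin X (U z) \<and> z \<in> U z \<and> (\<forall>n\<ge>N z. (f^^n) x \<notin> U z)"
    by metis
  obtain F where F: "finite F" "F \<subseteq> topspace X - G" "topspace X - G \<subseteq> (\<Union>z\<in>F. U z)"
  proof -
    have "\<exists>\<F>. finite \<F> \<and> \<F> \<subseteq> U ` (topspace X - G) \<and> topspace X - G \<subseteq> \<Union>\<F>"
    proof -
      have "\<forall>V\<in>U ` (topspace X - G). openin X V" using UN by blast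
      moreover have "topspace X - G \<subseteq> \<Union>(U ` (topspace X - G))" using UN by blast
      ultimately show ?thesis using K unfolding compactin_def by blast
    qed
    then obtain \<F> where "finite \<F>" "\<F> \<subseteq> U ` (topspace X - G)" "topspace X - G \<subseteq> \<Union>\<F>" by blast
    then obtain F where "finite F" "F \<subseteq> topspace X - G" "\<F> = U ` F"
      by (meson finite_subset_image)
    then show ?thesis using that \<open>topspace X - G \<subseteq> \<Union>\<F>\<close> by blast
  qed
  show ?thesis
  proof (intro exI[of _ "Max (insert 0 (N ` F))"] allI impI)
    fix n assume n: "Max (insert 0 (N ` F)) \<le> n"
    have "(f^^n) x \<notin> U z" if "z \<in> F" for z
      using UN[of z] that F n by (meson Max_ge finite_imageI finite_insert imageI insertI2 le_trans subsetD)
    then show "(f^^n) x \<in> G" using F funpow_in[OF f x] by blast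
  qed
qed

lemma incompressible:
  assumes C: "closedin X C" "openin X C" and ne: "\<Omega> \<inter> C \<noteq> {}"
    and inv: "\<And>z. z \<in> \<Omega> \<Longrightarrow> z \<in> C \<Longrightarrow> f z \<in> C"
  shows "\<Omega> \<subseteq> C"
proof (rule ccontr)
  assume "\<not> \<Omega> \<subseteq> C"
  then obtain z where z: "z \<in> \<Omega>" "z \<notin> C" by blast
  define V0 where "V0 = C \<inter> {w \<in> topspace X. f w \<in> C}"
  have oV0: "openin X V0" unfolding V0_def
    using C openin_continuous_map_preimage[OF f C(2)] by blast
  define G where "G = V0 \<union> (topspace X - C)"
  have oG: "openin X G" unfolding G_def using oV0 C by blast
  have OG: "\<Omega> \<subseteq> G" unfolding G_def V0_def using inv Om_sub by blast
  obtain N where N: "\<forall>n\<ge>N. (f^^n) x \<in> G" using eventually_in[OF oG OG] by blast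
  obtain y where y: "y \<in> \<Omega>" "y \<in> C" using ne by blast
  have "y \<in> V0" unfolding V0_def using y inv Om_sub by blast
  then obtain n where n: "n \<ge> N" "(f^^n) x \<in> V0" using y oV0 Om by blast
  have stay: "(f^^(n+k)) x \<in> V0" for k
  proof (induction k)
    case 0 then show ?case using n by simp
  next
    case (Suc k)
    have "(f^^(n+Suc k)) x = f ((f^^(n+k)) x)" by simp
    then have "(f^^(n+Suc k)) x \<in> C" using Suc unfolding V0_def by auto
    moreover have "(f^^(n+Suc k)) x \<in> G" by (meson N le_add1 order_trans n(1))
    ultimately show ?case unfolding G_def by blast
  qed
  have "openin X (topspace X - C)" using C by blast
  then obtain m where m: "m \<ge> n" "(f^^m) x \<in> topspace X - C" using z Om_sub Om by blast
  have "(f^^m) x \<in> V0" using stay[of "m - n"] m by simp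
  then show False using m unfolding V0_def by blast
qed

lemma fix_closed: "closedin X {z \<in> topspace X. (f^^p) z = z}"
  using closedin_continuous_maps_eq[OF H cont_funpow[OF f] continuous_map_id] by simp

lemma baire_step:
  assumes ne: "\<Omega> \<noteq> {}" and per: "\<forall>y\<in>\<Omega>. \<exists>p>0. (f^^p) y = y"
  shows "\<exists>p>0. \<exists>C. closedin X C \<and> openin X C \<and> \<Omega> \<inter> C \<noteq> {} \<and> (\<forall>z\<in>\<Omega> \<inter> C. (f^^p) z = z)"
proof -
  define Y where "Y = subtopology X \<Omega>"
  define F where "F p = {z \<in> \<Omega>. (f^^p) z = z}" for p
  have tY: "topspace Y = \<Omega>" using Om_sub unfolding Y_def by auto
  have "compact_space Y" unfolding Y_def
    using Om_closed cpt closedin_compact_space compact_space_subtopology by blast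
  moreover have "Hausdorff_space Y" unfolding Y_def using H Hausdorff_space_subtopology by blast
  ultimately have lc: "locally_compact_space Y \<and> regular_space Y"
    using compact_imp_locally_compact_space compact_Hausdorff_imp_regular_space by blast
  have cl: "closedin Y (F p)" for p
  proof -
    have "F p = \<Omega> \<inter> {z \<in> topspace X. (f^^p) z = z}" unfolding F_def using Om_sub by auto
    then show ?thesis unfolding Y_def using fix_closed closedin_subtopology_Int_closed by metis
  qed
  have U: "\<Union>(F ` {0<..}) = \<Omega>" unfolding F_def using per by auto
  have "\<exists>T\<in>F ` {0<..}. \<not> (closedin Y T \<and> Y interior_of T = {})"
  proof (rule ccontr)
    assume "\<not> ?thesis"
    then have "Y interior_of \<Union>(F ` {0<..}) = {}"
      using lc by (intro Baire_category_alt) auto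
    moreover have "Y interior_of \<Omega> = \<Omega>" using tY interior_of_topspace by metis
    ultimately show False using U ne by simp
  qed
  then obtain p where p: "p > 0" "Y interior_of F p \<noteq> {}" using cl by auto
  then obtain y where y: "y \<in> Y interior_of F p" by blast
  have "openin Y (Y interior_of F p)" by simp
  then obtain Oo where O: "openin X Oo" "Y interior_of F p = Oo \<inter> \<Omega>"
    unfolding Y_def openin_subtopology by blast
  have sub: "Y interior_of F p \<subseteq> F p" by (simp add: interior_of_subset)
  have "closedin X (\<Omega> - Oo)" using Om_closed O(1) by blast
  moreover have "y \<notin> \<Omega> - Oo" "y \<in> topspace X" using y O Om_sub by auto
  ultimately obtain C where C: "closedin X C" "openin X C" "y \<in> C" "C \<inter> (\<Omega> - Oo) = {}"
    using sep by metis
  show ?thesis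
  proof (intro exI conjI)
    show "p > 0" by fact
    show "closedin X C" "openin X C" by fact+
    show "\<Omega> \<inter> C \<noteq> {}" using C y O by auto
    show "\<forall>z\<in>\<Omega> \<inter> C. (f^^p) z = z" using C O sub unfolding F_def by blast
  qed
qed

lemma all_fix:
  assumes ne: "\<Omega> \<noteq> {}" and per: "\<forall>y\<in>\<Omega>. \<exists>p>0. (f^^p) y = y"
  shows "\<exists>p>0. \<forall>z\<in>\<Omega>. (f^^p) z = z"
proof -
  obtain p C where p: "p > 0" and C: "closedin X C" "openin X C" "\<Omega> \<inter> C \<noteq> {}"
    and fx: "\<forall>z\<in>\<Omega> \<inter> C. (f^^p) z = z"
    using baire_step[OF ne per] by blast
  define D where "D = {w\<in>topspace X. \<exists>i<p. (f^^i) w \<in> C}"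
  have cD: "closedin X D" "openin X D" unfolding D_def using clopen_orbit_union[OF f C(1,2)] by auto
  have "\<Omega> \<inter> D \<noteq> {}" using C(3) p Om_sub unfolding D_def by (auto intro!: exI[of _ 0])
  moreover have "f z \<in> D" if z: "z \<in> \<Omega>" "z \<in> D" for z
  proof -
    obtain i where i: "i < p" "(f^^i) z \<in> C" using z unfolding D_def by blast
    have fz: "f z \<in> topspace X" using z Om_sub f continuous_map_image_subset_topspace by blast
    show ?thesis
    proof (cases i)
      case 0
      then have "(f^^p) z = z" using fx z i by auto
      moreover have "(f^^p) z = (f^^(p - 1)) (f z)" using p
        by (cases p) (simp_all add: funpow_Suc_right del: funpow.simps)
      ultimately show ?thesis using fz i p 0 unfolding D_def
        by (intro CollectI conjI fz exI[of _ "p - 1"]) auto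
    next
      case (Suc j)
      then have "(f^^j) (f z) \<in> C" using i by (simp add: funpow_Suc_right del: funpow.simps)
      moreover have "j < p" using i Suc by simp
      ultimately show ?thesis using fz unfolding D_def by blast
    qed
  qed
  ultimately have OD: "\<Omega> \<subseteq> D" using incompressible[OF cD] by blast
  have "(f^^p) z = z" if z: "z \<in> \<Omega>" for z
  proof -
    obtain i where i: "i < p" "(f^^i) z \<in> C" using z OD unfolding D_def by blast
    have fiz: "(f^^p) ((f^^i) z) = (f^^i) z" using fx i Om_inv_pow[OF z] by blast
    obtain q where q: "q > 0" "(f^^q) z = z" using per z by blast
    have qk: "(f^^(q*k)) z = z" for k
    proof (induction k)
      case (Suc k)
      have "(f^^(q*Suc k)) z = (f^^q) ((f^^(q*k)) z)"
        by (simp add: funpow_add)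
      then show ?case using Suc q by simp
    qed simp
    define j where "j = q*i - i"
    have "i \<le> q * i" using q by simp
    then have "j + i = q * i" unfolding j_def by simp
    then have bk: "(f^^j) ((f^^i) z) = z" using qk[of i] by (metis comp_apply funpow_add)
    have "(f^^p) z = (f^^p) ((f^^j) ((f^^i) z))" using bk by simp
    also have "\<dots> = (f^^(p+j)) ((f^^i) z)" by (simp add: funpow_add)
    also have "\<dots> = (f^^(j+p)) ((f^^i) z)" by (simp add: add.commute)
    also have "\<dots> = (f^^j) ((f^^p) ((f^^i) z))" by (simp add: funpow_add)
    also have "\<dots> = z" using fiz bk by simp
    finally show ?thesis .
  qed
  then show ?thesis using p by blast
qed

lemma finite_Om:
  assumes per: "\<forall>y\<in>\<Omega>. \<exists>p>0. (f^^p) y = y"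
  shows "finite \<Omega>"
proof (cases "\<Omega> = {}")
  case False
  obtain p where p: "p > 0" and fx: "\<forall>z\<in>\<Omega>. (f^^p) z = z" using all_fix[OF False per] by blast
  obtain y where y: "y \<in> \<Omega>" using False by blast
  define Orb where "Orb = (\<lambda>i. (f^^i) y) ` {..<p}"
  have "\<Omega> \<subseteq> Orb"
  proof
    fix z assume z: "z \<in> \<Omega>"
    show "z \<in> Orb"
    proof (rule ccontr)
      assume zn: "z \<notin> Orb"
      have "Orb \<subseteq> topspace X" unfolding Orb_def using funpow_in[OF f] y Om_sub by blast
      then have "closedin X Orb" using closedin_Hausdorff_finite[OF H] unfolding Orb_def by blast
      then obtain U where U: "closedin X U" "openin X U" "z \<in> U" "U \<inter> Orb = {}"
        using sep zn z Om_sub by blast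
      define D where "D = {w\<in>topspace X. \<exists>i<p. (f^^i) w \<in> U}"
      have cD: "closedin X D" "openin X D" unfolding D_def using clopen_orbit_union[OF f U(1,2)] by auto
      define W where "W = topspace X - D"
      have cW: "closedin X W" "openin X W" unfolding W_def using cD by auto
      have "y \<in> W" using U y Om_sub unfolding W_def D_def Orb_def by auto
      then have "\<Omega> \<inter> W \<noteq> {}" using y by blast
      moreover have "f w \<in> W" if w: "w \<in> \<Omega>" "w \<in> W" for w
      proof -
        have fw: "f w \<in> topspace X" using w Om_sub f continuous_map_image_subset_topspace by blast
        have "(f^^i) (f w) \<notin> U" if i: "i < p" for i
        proof (cases "Suc i < p")
          case True
          then have "(f^^(Suc i)) w \<notin> U" using w Om_sub unfolding W_def D_def by blast
          then show ?thesis by (simp add: funpow_Suc_right del: funpow.simps)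
        next
          case False
          then have "Suc i = p" using i by simp
          then have "(f^^i) (f w) = (f^^p) w" by (auto simp add: funpow_Suc_right simp del: funpow.simps)
          then have "(f^^i) (f w) = w" using fx w by simp
          moreover have "w \<notin> U" using w p Om_sub unfolding W_def D_def
            by (auto dest: spec[of _ 0])
          ultimately show ?thesis by simp
        qed
        then show ?thesis using fw unfolding W_def D_def by blast
      qed
      ultimately have "\<Omega> \<subseteq> W" using incompressible[OF cW] by blast
      then have "z \<notin> D" using z unfolding W_def by blast
      then show False using z U p Om_sub unfolding D_def by (auto intro!: exI[of _ 0])
    qed
  qed
  then show ?thesis using finite_subset unfolding Orb_def by blast
qed simp

end


lemma sep_lemma:
  assumes cpt: "compact_space X" and H: "Hausdorff_space X" and td: "totally_disconnected_space X"
    and y: "y \<in> topspace X" and T: "closedin X T" "y \<notin> T"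
  shows "\<exists>U. closedin X U \<and> openin X U \<and> y \<in> U \<and> U \<inter> T = {}"
proof -
  define C where "C = connected_component_of_set X y"
  have Cc: "C \<in> connected_components_of X" unfolding C_def connected_components_of_def using y by blast
  have "connectedin X C" "C \<subseteq> topspace X" "y \<in> C"
    unfolding C_def using connectedin_connected_component_of[of X y] connected_component_of_subset_topspace[of X y]
      connected_component_of_refl[of X y] y by auto
  then have Cy: "C = {y}" using td unfolding totally_disconnected_space_def by blast
  have "separated_between X C T"
    using separated_between_compact_connected_component[OF compact_imp_locally_compact_space[OF cpt] H Cc]
      Cy y T by (simp add: disjnt_def)
  then show ?thesis unfolding separated_between Cy by blast
qed

lemma (in Metric_space) omega_eq:
  assumes f: "continuous_map mtopology mtopology f" and x: "x \<in> M"
  shows "omega_limit mtopology f x = {y \<in> topspace mtopology. \<forall>U. openin mtopology U \<and> y \<in> U \<longrightarrow> (\<forall>N. \<exists>n\<ge>N. (f^^n) x \<in> U)}"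
proof (intro set_eqI iffI)
  fix y assume "y \<in> omega_limit mtopology f x"
  then obtain n where n: "filterlim n at_top sequentially" "limitin mtopology (\<lambda>i. (f ^^ n i) x) y sequentially"
    unfolding omega_limit_def by blast
  show "y \<in> {y \<in> topspace mtopology. \<forall>U. openin mtopology U \<and> y \<in> U \<longrightarrow> (\<forall>N. \<exists>n\<ge>N. (f^^n) x \<in> U)}"
  proof (intro CollectI conjI allI impI)
    show "y \<in> topspace mtopology" using n(2) unfolding limitin_def by blast
    fix U N assume U: "openin mtopology U \<and> y \<in> U"
    have "eventually (\<lambda>i. (f ^^ n i) x \<in> U) sequentially" using n(2) U unfolding limitin_def by blast
    moreover have "eventually (\<lambda>i. N \<le> n i) sequentially" using n(1) unfolding filterlim_at_top by blast
    ultimately have "eventually (\<lambda>i. (f ^^ n i) x \<in> U \<and> N \<le> n i) sequentially" by (rule eventually_conj)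
    then obtain i where "(f ^^ n i) x \<in> U \<and> N \<le> n i" unfolding eventually_sequentially by blast
    then show "\<exists>m\<ge>N. (f^^m) x \<in> U" by blast
  qed
next
  fix y assume y: "y \<in> {y \<in> topspace mtopology. \<forall>U. openin mtopology U \<and> y \<in> U \<longrightarrow> (\<forall>N. \<exists>n\<ge>N. (f^^n) x \<in> U)}"
  then have yM: "y \<in> M" by simp
  have "\<exists>m\<ge>i. (f^^m) x \<in> mball y (1 / Suc i)" for i
  proof -
    have "openin mtopology (mball y (1 / Suc i))" by simp
    moreover have "y \<in> mball y (1 / Suc i)" using yM by simp
    ultimately show ?thesis using y by blast
  qed
  then obtain n where n: "\<And>i. n i \<ge> i \<and> (f^^(n i)) x \<in> mball y (1 / Suc i)" by metis
  have "filterlim n at_top sequentially"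
    unfolding filterlim_at_top eventually_sequentially using n by (meson le_trans)
  moreover have "limitin mtopology (\<lambda>i. (f ^^ n i) x) y sequentially"
    unfolding limitin_metric
  proof (intro conjI allI impI yM)
    fix e :: real assume e: "e > 0"
    obtain N where N: "inverse (real (Suc N)) < e" using reals_Archimedean e by blast
    show "eventually (\<lambda>i. (f ^^ n i) x \<in> M \<and> d ((f ^^ n i) x) y < e) sequentially"
      unfolding eventually_sequentially
    proof (intro exI allI impI)
      fix i assume i: "N \<le> i"
      have "1 / real (Suc i) \<le> inverse (real (Suc N))" using i
        by (simp add: divide_simps)
      moreover have "(f ^^ n i) x \<in> M" "d y ((f ^^ n i) x) < 1 / Suc i" using n[of i] by auto
      moreover have "d ((f ^^ n i) x) y = d y ((f ^^ n i) x)" using commute by simp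
      ultimately show "(f ^^ n i) x \<in> M \<and> d ((f ^^ n i) x) y < e" using N by linarith
    qed
  qed
  ultimately show "y \<in> omega_limit mtopology f x" unfolding omega_limit_def by blast
qed

lemma main_FTP:
  assumes ms: "metrizable_space X" and cpt: "compact_space X" and td: "totally_disconnected_space X"
  shows "omega_FTP X"
  unfolding omega_FTP_def
proof (intro allI impI, elim conjE)
  fix f x assume f: "continuous_map X X f" and x: "x \<in> topspace X"
    and tp: "totally_periodic f (omega_limit X f x)"
  obtain M d where Md: "Metric_space M d" and X: "X = Metric_space.mtopology M d"
    using ms unfolding metrizable_space_def by blast
  have H: "Hausdorff_space X" using ms metrizable_imp_Hausdorff_space by blast
  define \<Omega> where "\<Omega> = {y \<in> topspace X. \<forall>U. openin X U \<and> y \<in> U \<longrightarrow> (\<forall>N. \<exists>n\<ge>N. (f^^n) x \<in> U)}"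
  have xM: "x \<in> M" using x X Metric_space.topspace_mtopology[OF Md] by simp
  have eq: "omega_limit X f x = \<Omega>"
    unfolding \<Omega>_def X by (rule Metric_space.omega_eq[OF Md f[unfolded X] xM])
  interpret omsetup X f x \<Omega>
  proof
    show "compact_space X" "Hausdorff_space X" "continuous_map X X f" "x \<in> topspace X" by fact+
    show "\<Omega> = {y \<in> topspace X. \<forall>U. openin X U \<and> y \<in> U \<longrightarrow> (\<forall>N. \<exists>n\<ge>N. (f^^n) x \<in> U)}"
      by (rule \<Omega>_def)
    show "\<And>y T. y \<in> topspace X \<Longrightarrow> closedin X T \<Longrightarrow> y \<notin> T \<Longrightarrow>
               \<exists>U. closedin X U \<and> openin X U \<and> y \<in> U \<and> U \<inter> T = {}"
      by (rule sep_lemma[OF cpt H td])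
  qed
  show "finite (omega_limit X f x)"
    using tp finite_Om unfolding eq totally_periodic_def periodic_point_def by blast
qed

lemma cantor_props:
  "metrizable_space cantor_space \<and> compact_space cantor_space \<and> totally_disconnected_space cantor_space"
proof (intro conjI)
  show "metrizable_space cantor_space" unfolding cantor_space_def
    by (subst metrizable_space_product_topology) auto
  show "compact_space cantor_space" unfolding cantor_space_def
    by (subst compact_space_product_topology) (auto simp: compact_space_discrete_topology)
  show "totally_disconnected_space cantor_space"
    unfolding totally_disconnected_space_def
  proof (intro allI impI, elim conjE)
    fix S assume S: "S \<subseteq> topspace cantor_space" "connectedin cantor_space S"
    show "\<exists>a. S \<subseteq> {a}"
    proof (cases "S = {}")
      case False
      then obtain s where s: "s \<in> S" by blast
      have "w k = s k" if w: "w \<in> S" for w k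
      proof -
        have c: "continuous_map (product_topology (\<lambda>_. discrete_topology {0::nat,1}) UNIV) (discrete_topology {0::nat,1}) (\<lambda>w. w k)"
          by (rule continuous_map_product_projection) simp
        have "connectedin (discrete_topology {0::nat, 1}) ((\<lambda>w. w k) ` S)"
          by (rule connectedin_continuous_map_image[OF c S(2)[unfolded cantor_space_def]])
        then obtain a where "(\<lambda>w. w k) ` S \<subseteq> {a}" unfolding connectedin_discrete_topology by blast
        then show ?thesis using w s by blast
      qed
      then show ?thesis by (intro exI[of _ s]) auto
    qed simp
  qed
qed

theorem corollary2p6:
  shows "(\<forall>(M :: 'a set) d. Metric_space M d \<and> compact_space (Metric_space.mtopology M d)
            \<and> totally_disconnected_space (Metric_space.mtopology M d)
            \<longrightarrow> omega_FTP (Metric_space.mtopology M d))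
         \<and> omega_FTP cantor_space"
proof (intro conjI allI impI)
  fix M :: "'a set" and d
  assume a: "Metric_space M d \<and> compact_space (Metric_space.mtopology M d)
            \<and> totally_disconnected_space (Metric_space.mtopology M d)"
  show "omega_FTP (Metric_space.mtopology M d)"
    using main_FTP[OF Metric_space.metrizable_space_mtopology] a by blast
next
  show "omega_FTP cantor_space" using main_FTP cantor_props by blast
qed

end
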